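(* Let $p>2$ be an odd integer and $n\ge 1$. Then every regular expression describing the divisibility language $L^{\mathrm{div}}_{n,p}=\{ w\in \{0,1\}^n : \mathrm{bin}(w) \equiv 0 \pmod p\}$ has length at least $\mathrm{rpn}(L^{\mathrm{div}}_{n,p}) \geq \Omega\big( n^{-1} p^{\log ( n/ \log p ) -2 } \big)$.
   Context: For $w=w_1\cdots w_d\in\{0,1\}^*$, $\mathrm{bin}(w)=\sum_{i=1}^d w_i2^{d-i}$ is its value as a binary number with the most significant bit leftmost ($\mathrm{bin}(\epsilon)=0$). Regular expressions are built from $\epsilon$ and letters by union and concatenation (no $\emptyset$, no star needed for finite languages); $\mathrm{rpn}(L)$ is the minimum number of syntax-tree nodes of an expression describing $L$. Logarithms are base 2. *)

theory Defs
  imports Complex_Main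
begin

text \<open>Words over the binary alphabet {0,1}: letter 1 is True, letter 0 is False.\<close>

definition bin :: "bool list \<Rightarrow> nat" where
  "bin w = foldl (\<lambda>a b. 2 * a + (if b then 1 else 0)) 0 w"

datatype regexp = Eps | Lit bool | Union regexp regexp | Conc regexp regexp

fun lang :: "regexp \<Rightarrow> bool list set" where
  "lang Eps = {[]}"
| "lang (Lit a) = {[a]}"
| "lang (Union r s) = lang r \<union> lang s"
| "lang (Conc r s) = {u @ v | u v. u \<in> lang r \<and> v \<in> lang s}"

fun rsize :: "regexp \<Rightarrow> nat" where
  "rsize Eps = 1"
| "rsize (Lit a) = 1"
| "rsize (Union r s) = rsize r + rsize s + 1"
| "rsize (Conc r s) = rsize r + rsize s + 1"

definition rpn :: "bool list set \<Rightarrow> nat" where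
  "rpn L = (LEAST s. \<exists>r. lang r = L \<and> rsize r = s)"

definition Ldiv :: "nat \<Rightarrow> nat \<Rightarrow> bool list set" where
  "Ldiv n p = {w. length w = n \<and> bin w mod p = 0}"

end

theory Submission
  imports Defs "HOL-Number_Theory.Cong"
begin

lemma foldl_bin: "foldl (\<lambda>a b. 2 * a + (if b then 1 else 0)) a v = a * 2 ^ length v + bin v"
proof (induction v arbitrary: a rule: rev_induct)
  case Nil then show ?case by (simp add: bin_def)
next
  case (snoc x xs)
  have "bin (xs @ [x]) = 2 * bin xs + (if x then 1 else 0)"
    using snoc[of 0] by (simp add: bin_def)
  then show ?case using snoc by (simp add: algebra_simps)
qed

lemma bin_append: "bin (u @ v) = bin u * 2 ^ length v + bin v"
proof -
  have "bin (u @ v) = foldl (\<lambda>a b. 2 * a + (if b then 1 else 0)) (bin u) v"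
    by (simp add: bin_def)
  then show ?thesis by (simp only: foldl_bin)
qed

lemma bin_Cons: "bin (a # v) = (if a then 1 else 0) * 2 ^ length v + bin v"
  using bin_append[of "[a]" v] by (simp add: bin_def)

lemma bin_less: "bin w < 2 ^ length w"
proof (induction w)
  case Nil then show ?case by (simp add: bin_def)
next
  case (Cons a w) then show ?case by (auto simp: bin_Cons)
qed

lemma bin_inj: "length u = length v \<Longrightarrow> bin u = bin v \<Longrightarrow> u = v"
proof (induction u arbitrary: v)
  case Nil then show ?case by simp
next
  case (Cons a u)
  then obtain b v' where v: "v = b # v'" "length v' = length u" by (cases v) auto
  have h: "(if a then 1 else 0) * 2 ^ length u + bin u = (if b then 1 else 0) * 2 ^ length u + bin v'"
    using Cons.prems v by (simp add: bin_Cons)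
  have "a = b" using h bin_less[of u] bin_less[of v'] v(2)
    by (cases a; cases b; auto)
  then have "bin u = bin v'" using h by simp
  then show ?case using Cons.IH v \<open>a = b\<close> by simp
qed

fun word :: "nat \<Rightarrow> nat \<Rightarrow> bool list" where
  "word 0 x = []"
| "word (Suc n) x = word n (x div 2) @ [odd x]"

lemma word_len: "length (word n x) = n"
  by (induction n arbitrary: x) auto

lemma bin_word: "bin (word n x) = x mod 2 ^ n"
proof (induction n arbitrary: x)
  case 0 then show ?case by (simp add: bin_def)
next
  case (Suc n)
  have b1: "bin [odd x] = x mod 2" by (simp add: bin_def odd_iff_mod_2_eq_one)
  have "bin (word (Suc n) x) = bin (word n (x div 2)) * 2 + bin [odd x]"
    by (simp add: bin_append)
  also have "\<dots> = (x div 2 mod 2 ^ n) * 2 + x mod 2"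
    by (simp only: Suc b1)
  also have "\<dots> = x mod 2 ^ Suc n"
    by (simp add: mod_mult2_eq)
  finally show ?case .
qed

lemma lang_nonempty: "lang r \<noteq> {}"
  by (induction r) auto

lemma lang_finite: "finite (lang r)"
proof (induction r)
  case (Conc r s)
  have "lang (Conc r s) = (\<lambda>(u,v). u @ v) ` (lang r \<times> lang s)" by auto
  then show ?case using Conc by simp
qed auto

definition homog :: "nat \<Rightarrow> bool list set \<Rightarrow> bool" where
  "homog p A \<longleftrightarrow> (\<forall>w\<in>A. \<forall>w'\<in>A. length w = length w' \<and> bin w mod p = bin w' mod p)"

lemma homog_conc:
  assumes "odd p" "homog p {u @ v | u v. u \<in> R \<and> v \<in> S}" "R \<noteq> {}" "S \<noteq> {}"
  shows "homog p R" "homog p S"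
proof -
  obtain v0 where v0: "v0 \<in> S" using assms(4) by auto
  obtain u0 where u0: "u0 \<in> R" using assms(3) by auto
  have cop: "coprime ((2::nat) ^ k) p" for k using assms(1) by simp
  show "homog p R" unfolding homog_def
  proof (intro ballI conjI)
    fix w w' assume w: "w \<in> R" "w' \<in> R"
    have "w @ v0 \<in> {u @ v | u v. u \<in> R \<and> v \<in> S}" "w' @ v0 \<in> {u @ v | u v. u \<in> R \<and> v \<in> S}"
      using w v0 by auto
    then have h: "length (w @ v0) = length (w' @ v0)" "bin (w @ v0) mod p = bin (w' @ v0) mod p"
      using assms(2) unfolding homog_def by blast+
    then show "length w = length w'" by simp
    from h(2) have "[bin w * 2 ^ length v0 + bin v0 = bin w' * 2 ^ length v0 + bin v0] (mod p)"
      by (simp add: bin_append cong_def)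
    then have "[bin w * 2 ^ length v0 = bin w' * 2 ^ length v0] (mod p)"
      by (metis add.commute cong_add_lcancel_nat)
    then show "bin w mod p = bin w' mod p"
      using cong_mult_rcancel_nat[OF cop] by (simp add: cong_def)
  qed
  show "homog p S" unfolding homog_def
  proof (intro ballI conjI)
    fix w w' assume w: "w \<in> S" "w' \<in> S"
    have "u0 @ w \<in> {u @ v | u v. u \<in> R \<and> v \<in> S}" "u0 @ w' \<in> {u @ v | u v. u \<in> R \<and> v \<in> S}"
      using w u0 by auto
    then have h: "length (u0 @ w) = length (u0 @ w')" "bin (u0 @ w) mod p = bin (u0 @ w') mod p"
      using assms(2) unfolding homog_def by blast+
    then show l: "length w = length w'" by simp
    from h(2) l have "[bin u0 * 2 ^ length w + bin w = bin u0 * 2 ^ length w + bin w'] (mod p)"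
      by (simp add: bin_append cong_def)
    then show "bin w mod p = bin w' mod p"
      by (metis cong_add_lcancel_nat cong_def)
  qed
qed

lemma homog_card:
  assumes "homog p B" "\<forall>w\<in>B. length w = u" "p > 0"
  shows "card B \<le> (2 ^ u - 1) div p + 1"
proof -
  let ?f = "\<lambda>w. bin w div p"
  have inj: "inj_on ?f B"
  proof
    fix x y assume xy: "x \<in> B" "y \<in> B" "bin x div p = bin y div p"
    have m: "bin x mod p = bin y mod p" using assms(1) xy(1,2) unfolding homog_def by blast
    have "bin x = bin x div p * p + bin x mod p" by (rule div_mult_mod_eq[symmetric])
    also have "\<dots> = bin y div p * p + bin y mod p" using xy(3) m by (simp only:)
    also have "\<dots> = bin y" by (rule div_mult_mod_eq)
    finally have "bin x = bin y" .
    moreover have "length x = length y" using assms(2) xy(1,2) by simp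
    ultimately show "x = y" using bin_inj[of x y] by simp
  qed
  have sub: "?f ` B \<subseteq> {..(2 ^ u - 1) div p}"
  proof
    fix y assume "y \<in> ?f ` B"
    then obtain w where w: "w \<in> B" "y = bin w div p" by blast
    have "length w = u" using assms(2) w(1) by blast
    then have "bin w < 2 ^ u" using bin_less[of w] by simp
    then have "bin w \<le> 2 ^ u - 1" by simp
    then have "y \<le> (2 ^ u - 1) div p" unfolding w(2) by (rule div_le_mono)
    then show "y \<in> {..(2 ^ u - 1) div p}" by simp
  qed
  have "card B = card (?f ` B)" using card_image[OF inj] by simp
  also have "\<dots> \<le> card {..(2 ^ u - 1) div p}" by (rule card_mono[OF finite_atMost sub])
  finally show ?thesis by simp
qed

lemma card_Ldiv:
  assumes "p > 0"
  shows "real (card (Ldiv n p)) \<ge> 2 ^ n / p"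
proof -
  define m where "m = (2 ^ n - 1) div p + 1"
  let ?g = "\<lambda>k. word n (k * p)"
  have lt: "k * p < 2 ^ n" if "k \<in> {..<m}" for k
  proof -
    have "k < (2 ^ n - 1) div p + 1" using that unfolding m_def by simp
    then have "k \<le> (2 ^ n - 1) div p" by simp
    then have "k * p \<le> ((2 ^ n - 1) div p) * p" by simp
    also have "\<dots> \<le> 2 ^ n - 1" by (rule div_times_less_eq_dividend)
    finally have "k * p \<le> 2 ^ n - 1" .
    moreover have "(1::nat) \<le> 2 ^ n" by simp
    ultimately show ?thesis by linarith
  qed
  have inj: "inj_on ?g {..<m}"
  proof
    fix x y assume xy: "x \<in> {..<m}" "y \<in> {..<m}" "word n (x * p) = word n (y * p)"
    have "x * p < 2 ^ n" "y * p < 2 ^ n" using lt[OF xy(1)] lt[OF xy(2)] by blast+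
    moreover have "bin (word n (x * p)) = bin (word n (y * p))" using xy(3) by simp
    ultimately have "x * p = y * p" unfolding bin_word by (metis mod_less)
    then show "x = y" using assms by (metis mult_right_cancel not_gr0)
  qed
  have sub: "?g ` {..<m} \<subseteq> Ldiv n p"
  proof
    fix w assume "w \<in> ?g ` {..<m}"
    then obtain k where k: "k \<in> {..<m}" "w = word n (k * p)" by blast
    have "bin w = k * p" using lt[OF k(1)] k(2) by (simp add: bin_word)
    then show "w \<in> Ldiv n p" unfolding Ldiv_def using k(2) by (simp add: word_len)
  qed
  have fin: "finite (Ldiv n p)"
  proof -
    have "Ldiv n p \<subseteq> {w. set w \<subseteq> UNIV \<and> length w = n}" unfolding Ldiv_def by auto
    then show ?thesis using finite_lists_length_eq[of "UNIV::bool set" n] finite_subset by auto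
  qed
  have "m \<le> card (Ldiv n p)"
    using card_mono[OF fin sub] card_image[OF inj] by simp
  moreover have "2 ^ n \<le> m * p"
  proof -
    have "2 ^ n - 1 < ((2 ^ n - 1) div p + 1) * p"
      using dividend_less_div_times[OF assms, of "2^n-1"] by (simp add: algebra_simps)
    moreover have "(1::nat) \<le> 2 ^ n" by simp
    ultimately show ?thesis unfolding m_def by linarith
  qed
  ultimately have "(2::nat) ^ n \<le> card (Ldiv n p) * p"
    using mult_le_mono1[of m "card (Ldiv n p)" p] by linarith
  then have "real ((2::nat) ^ n) \<le> real (card (Ldiv n p) * p)"
    using of_nat_le_iff by blast
  then have "(2::real) ^ n \<le> real (card (Ldiv n p)) * p"
    by simp
  then show ?thesis using assms by (simp add: divide_le_eq)
qed


definition LL :: "nat \<Rightarrow> real" where "LL p = log 2 (real p)"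
definition W :: "nat \<Rightarrow> nat \<Rightarrow> real" where
  "W p l = ((real l + 2 * LL p) / (2 * LL p)) powr (LL p - 1)"

lemma LL_gt1: assumes "p > 2" shows "LL p > 1"
proof -
  have "(2::real) powr 1 < real p" using assms by simp
  then show ?thesis unfolding LL_def using assms by (subst less_log_iff) auto
qed

lemma pow_LL: assumes "p > 2" shows "2 powr LL p = real p"
  unfolding LL_def using assms by simp

lemma exp_half: "exp (real u / 2) \<le> 2 ^ u"
proof -
  have e: "exp (1/2::real) \<le> 2"
  proof -
    have "exp (1/2::real) * exp (1/2) = exp 1" by (simp add: exp_add[symmetric])
    also have "\<dots> \<le> 3" by (rule exp_le)
    finally have "exp (1/2::real) * exp (1/2) \<le> 3" .
    moreover have "exp (1/2::real) > 0" by simp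
    ultimately show ?thesis
    proof (rule_tac ccontr)
      assume h: "exp (1/2::real) * exp (1/2) \<le> 3" "exp (1/2::real) > 0" "\<not> exp (1/2::real) \<le> 2"
      then have "(2::real) * 2 < exp (1/2) * exp (1/2)" by (intro mult_strict_mono) auto
      then show False using h(1) by linarith
    qed
  qed
  have "exp (real u / 2) = exp (1/2) ^ u" using exp_of_nat_mult[of u "1/2"] by simp
  also have "\<dots> \<le> 2 ^ u" by (rule power_mono[OF e]) simp
  finally show ?thesis .
qed

lemma W_ratio:
  assumes "p > 2"
  shows "W p (a + u) = W p a * ((real a + real u + 2 * LL p) / (real a + 2 * LL p)) powr (LL p - 1)"
proof -
  let ?T = "2 * LL p"
  have T: "?T > 0" using LL_gt1[OF assms] by simp
  have aT: "real a + ?T > 0" using T by simp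
  have e: "(real (a + u) + ?T) / ?T = ((real a + ?T) / ?T) * ((real a + real u + ?T) / (real a + ?T))"
  proof -
    have ne: "real a + ?T \<noteq> 0" "?T \<noteq> 0" using T aT by auto
    have "((real a + ?T) / ?T) * ((real a + real u + ?T) / (real a + ?T)) = (real a + real u + ?T) / ?T"
      using ne by simp
    then show ?thesis by simp
  qed
  show ?thesis unfolding W_def e powr_mult by (rule refl)
qed

lemma rho_exp:
  assumes "p > 2"
  shows "((real a + real u + 2 * LL p) / (real a + 2 * LL p)) powr (LL p - 1) \<le> exp (real u / 2)"
proof -
  let ?T = "2 * LL p" and ?L = "LL p"
  have L: "?L > 1" using LL_gt1[OF assms] .
  have T: "?T > 0" using L by simp
  have "(real a + real u + ?T) / (real a + ?T) = 1 + real u / (real a + ?T)"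
    using T by (simp add: field_simps)
  also have "\<dots> \<le> 1 + real u / ?T"
    using T by (simp add: frac_le)
  also have "\<dots> \<le> exp (real u / ?T)" by (rule exp_ge_add_one_self)
  finally have r: "(real a + real u + ?T) / (real a + ?T) \<le> exp (real u / ?T)" .
  have "((real a + real u + ?T) / (real a + ?T)) powr (?L - 1) \<le> exp (real u / ?T) powr (?L - 1)"
    using r T L by (intro powr_mono2) auto
  also have "\<dots> = exp (real u / ?T * (?L - 1))" by (rule exp_powr_real)
  also have "\<dots> \<le> exp (real u / 2)"
  proof -
    have "real u / ?T * (?L - 1) = real u / 2 * ((?L - 1) / ?L)" using L by (simp add: field_simps)
    also have "\<dots> \<le> real u / 2 * 1" using L by (intro mult_left_mono) auto
    finally show ?thesis by simp
  qed
  finally show ?thesis .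
qed

lemma key:
  assumes "p > 2" "odd p" "u \<le> a" "c \<le> (2 ^ u - 1) div p + 1"
  shows "real c * W p (a + u) \<le> 2 ^ u * W p a"
proof -
  let ?T = "2 * LL p" and ?L = "LL p"
  let ?r = "((real a + real u + ?T) / (real a + ?T)) powr (?L - 1)"
  have L: "?L > 1" using LL_gt1[OF assms(1)] .
  have T: "?T > 0" using L by simp
  have Wa: "W p a \<ge> 0" unfolding W_def by simp
  have eq: "real c * W p (a + u) = W p a * (real c * ?r)" using W_ratio[OF assms(1), of a u] by simp
  have "real c * ?r \<le> 2 ^ u"
  proof (cases "2 ^ u \<le> p")
    case True
    moreover have "(1::nat) \<le> 2 ^ u" by simp
    ultimately have "2 ^ u - 1 < p" by linarith
    then have "(2 ^ u - 1) div p = 0" by (simp add: div_eq_0_iff)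
    then have c: "c \<le> 1" using assms(4) by simp
    have "real c * ?r \<le> 1 * ?r" using c by (intro mult_right_mono) auto
    also have "\<dots> \<le> exp (real u / 2)" using rho_exp[OF assms(1)] by simp
    also have "\<dots> \<le> 2 ^ u" by (rule exp_half)
    finally show ?thesis .
  next
    case False
    have "real c \<le> real ((2 ^ u - 1) div p + 1)" using assms(4) by linarith
    also have "\<dots> \<le> 2 ^ u / real p + 1"
    proof -
      have d: "((2 ^ u - 1) div p) * p \<le> 2 ^ u - 1" by (rule div_times_less_eq_dividend)
      have "((2 ^ u - 1) div p) * p \<le> (2::nat) ^ u" using d by linarith
      then have "real ((2 ^ u - 1) div p) * real p \<le> 2 ^ u"
        by (metis of_nat_le_iff of_nat_mult of_nat_numeral of_nat_power)
      then have "real ((2 ^ u - 1) div p) \<le> 2 ^ u / real p"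
        using assms(1) by (simp add: pos_le_divide_eq)
      then show ?thesis by simp
    qed
    also have "\<dots> \<le> 2 * 2 ^ u / real p"
    proof -
      have "real p \<le> 2 ^ u" using False by (metis nat_le_linear not_le of_nat_le_iff of_nat_numeral of_nat_power)
      then have "1 \<le> 2 ^ u / real p" using assms(1) by (simp add: pos_le_divide_eq)
      then show ?thesis by simp
    qed
    finally have c: "real c \<le> 2 * 2 ^ u / real p" .
    have "(real a + real u + ?T) / (real a + ?T) \<le> 2" using T assms(3) by (simp add: field_simps)
    then have "?r \<le> 2 powr (?L - 1)" using T L by (intro powr_mono2) auto
    also have "\<dots> = real p / 2" using pow_LL[OF assms(1)] by (simp add: powr_diff)
    finally have r: "?r \<le> real p / 2" .
    have "real c * ?r \<le> (2 * 2 ^ u / real p) * (real p / 2)"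
      using c r by (intro mult_mono) auto
    also have "\<dots> = 2 ^ u" using assms(1) by simp
    finally show ?thesis .
  qed
  then have "W p a * (real c * ?r) \<le> W p a * 2 ^ u" using Wa by (intro mult_left_mono) auto
  then show ?thesis unfolding eq by (simp add: mult.commute)
qed

lemma homog_union: "homog p (A \<union> B) \<Longrightarrow> homog p A \<and> homog p B"
  unfolding homog_def by blast

lemma conc_card:
  assumes "finite R" "finite S" "\<forall>x\<in>R. \<forall>y\<in>R. length x = length y"
  shows "card {u @ v | u v. u \<in> R \<and> v \<in> S} = card R * card S"
proof -
  have eq: "{u @ v | u v. u \<in> R \<and> v \<in> S} = (\<lambda>(u,v). u @ v) ` (R \<times> S)" by auto
  have "inj_on (\<lambda>(u,v). u @ v) (R \<times> S)"
  proof (rule inj_onI, clarify)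
    fix u v u' v' assume h: "u \<in> R" "v \<in> S" "u' \<in> R" "v' \<in> S" "u @ v = u' @ v'"
    have "length u = length u'" using assms(3) h(1,3) by blast
    then show "u = u' \<and> v = v'" using h(5) by simp
  qed
  then show ?thesis unfolding eq using card_image card_cartesian_product by metis
qed

lemma main:
  assumes p: "p > 2" "odd p"
  shows "homog p (lang r) \<Longrightarrow> w \<in> lang r \<Longrightarrow>
    real (card (lang r)) * W p (length w) / 2 ^ length w \<le> real (rsize r)"
proof (induction r arbitrary: w)
  case Eps
  then show ?case unfolding W_def by simp
next
  case (Lit a)
  have "W p 1 \<le> exp (real 1 / 2)" using rho_exp[OF p(1), of 0 1] unfolding W_def by simp
  also have "\<dots> \<le> 2 ^ 1" by (rule exp_half)
  finally show ?case using Lit by simp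
next
  case (Union r s)
  have hU: "homog p (lang r \<union> lang s)" using Union.prems(1) by (simp only: lang.simps)
  have wU: "w \<in> lang r \<union> lang s" using Union.prems(2) by (simp only: lang.simps)
  from hU have hu: "homog p (lang r) \<and> homog p (lang s)" by (rule homog_union)
  have h: "homog p (lang r)" "homog p (lang s)" using hu by simp_all
  obtain wr ws where w: "wr \<in> lang r" "ws \<in> lang s" using lang_nonempty by blast
  have lr: "length wr = length w" "length ws = length w"
    using hU wU w unfolding homog_def by blast+
  let ?k = "W p (length w) / 2 ^ length w"
  have k: "?k \<ge> 0" unfolding W_def by simp
  have "real (card (lang (Union r s))) * W p (length w) / 2 ^ length w
      = real (card (lang r \<union> lang s)) * ?k" by simp
  also have "\<dots> \<le> (real (card (lang r)) + real (card (lang s))) * ?k"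
    using card_Un_le[of "lang r" "lang s"] k by (intro mult_right_mono) auto
  also have "\<dots> = real (card (lang r)) * W p (length wr) / 2 ^ length wr
      + real (card (lang s)) * W p (length ws) / 2 ^ length ws"
    using lr by (simp add: add_divide_distrib distrib_right)
  also have "\<dots> \<le> real (rsize r) + real (rsize s)"
    using Union.IH(1)[OF h(1) w(1)] Union.IH(2)[OF h(2) w(2)] by linarith
  also have "\<dots> \<le> real (rsize (Union r s))" by simp
  finally show ?case .
next
  case (Conc r s)
  have hh: "homog p {u @ v | u v. u \<in> lang r \<and> v \<in> lang s}" using Conc.prems(1) by (simp only: lang.simps)
  have h: "homog p (lang r)" "homog p (lang s)"
    using homog_conc[OF p(2) hh lang_nonempty lang_nonempty] by simp_all
  have "w \<in> {u @ v | u v. u \<in> lang r \<and> v \<in> lang s}" using Conc.prems(2) by (simp only: lang.simps)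
  then obtain x y where xy: "w = x @ y" "x \<in> lang r" "y \<in> lang s" by blast
  have lx: "\<forall>z\<in>lang r. length z = length x" using h(1) xy(2) unfolding homog_def by blast
  have ly: "\<forall>z\<in>lang s. length z = length y" using h(2) xy(3) unfolding homog_def by blast
  have card: "card (lang (Conc r s)) = card (lang r) * card (lang s)"
    using conc_card[OF lang_finite lang_finite] lx by simp
  let ?a = "length x" and ?b = "length y"
  have p0: "p > 0" using p by simp
  have cr: "card (lang r) \<le> (2 ^ ?a - 1) div p + 1" by (rule homog_card[OF h(1) lx p0])
  have cs: "card (lang s) \<le> (2 ^ ?b - 1) div p + 1" by (rule homog_card[OF h(2) ly p0])
  have IHr: "real (card (lang r)) * W p ?a / 2 ^ ?a \<le> real (rsize r)" using Conc.IH(1)[OF h(1) xy(2)] .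
  have IHs: "real (card (lang s)) * W p ?b / 2 ^ ?b \<le> real (rsize s)" using Conc.IH(2)[OF h(2) xy(3)] .
  have LHS: "real (card (lang (Conc r s))) * W p (length w) / 2 ^ length w
     = real (card (lang r)) * real (card (lang s)) * W p (?a + ?b) / (2 ^ ?a * 2 ^ ?b)"
    using card xy(1) by (simp add: power_add)
  show ?case
  proof (cases "?b \<le> ?a")
    case True
    have K: "real (card (lang s)) * W p (?a + ?b) \<le> 2 ^ ?b * W p ?a"
      by (rule key[OF p True cs])
    have "real (card (lang r)) * real (card (lang s)) * W p (?a + ?b) / (2 ^ ?a * 2 ^ ?b)
        = real (card (lang r)) * (real (card (lang s)) * W p (?a + ?b)) / (2 ^ ?a * 2 ^ ?b)"
      by (simp add: algebra_simps)
    also have "\<dots> \<le> real (card (lang r)) * (2 ^ ?b * W p ?a) / (2 ^ ?a * 2 ^ ?b)"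
      using K by (intro divide_right_mono mult_left_mono) auto
    also have "\<dots> = real (card (lang r)) * W p ?a / 2 ^ ?a" by simp
    also have "\<dots> \<le> real (rsize r)" by (rule IHr)
    also have "\<dots> \<le> real (rsize (Conc r s))" by simp
    finally show ?thesis using LHS by simp
  next
    case False
    then have F: "?a \<le> ?b" by simp
    have K: "real (card (lang r)) * W p (?b + ?a) \<le> 2 ^ ?a * W p ?b"
      by (rule key[OF p F cr])
    have "real (card (lang r)) * real (card (lang s)) * W p (?a + ?b) / (2 ^ ?a * 2 ^ ?b)
        = real (card (lang s)) * (real (card (lang r)) * W p (?b + ?a)) / (2 ^ ?a * 2 ^ ?b)"
      by (simp add: algebra_simps)
    also have "\<dots> \<le> real (card (lang s)) * (2 ^ ?a * W p ?b) / (2 ^ ?a * 2 ^ ?b)"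
      using K by (intro divide_right_mono mult_left_mono) auto
    also have "\<dots> = real (card (lang s)) * W p ?b / 2 ^ ?b" by simp
    also have "\<dots> \<le> real (rsize s)" by (rule IHs)
    also have "\<dots> \<le> real (rsize (Conc r s))" by simp
    finally show ?thesis using LHS by simp
  qed
qed

lemma regex_word: "\<exists>r. lang r = {w}"
proof (induction w)
  case Nil
  have "lang Eps = {[]}" by simp
  then show ?case by blast
next
  case (Cons a w)
  then obtain r where r: "lang r = {w}" by blast
  have "lang (Conc (Lit a) r) = {a # w}" using r by auto
  then show ?case by blast
qed

lemma regex_exists: "finite A \<Longrightarrow> A \<noteq> {} \<Longrightarrow> \<exists>r. lang r = A"
proof (induction A rule: finite_ne_induct)
  case (singleton x) then show ?case using regex_word by blast
next
  case (insert x F)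
  obtain r where r: "lang r = F" using insert.IH by blast
  obtain q where q: "lang q = {x}" using regex_word by blast
  have "lang (Union q r) = insert x F" using q r by auto
  then show ?case by blast
qed

lemma rpn_bound:
  assumes p: "p > 2" "odd p"
  shows "real (rpn (Ldiv n p)) \<ge> W p n / real p"
proof -
  have fin: "finite (Ldiv n p)"
  proof -
    have "Ldiv n p \<subseteq> {w. set w \<subseteq> UNIV \<and> length w = n}" unfolding Ldiv_def by auto
    then show ?thesis using finite_lists_length_eq[of "UNIV::bool set" n] finite_subset by auto
  qed
  have w0: "word n 0 \<in> Ldiv n p" unfolding Ldiv_def by (simp add: word_len bin_word)
  then obtain r where "lang r = Ldiv n p" using regex_exists[OF fin] by blast
  then have ex: "\<exists>s r. lang r = Ldiv n p \<and> rsize r = s" by blast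
  obtain r0 where r0: "lang r0 = Ldiv n p" "rsize r0 = rpn (Ldiv n p)"
    using LeastI_ex[OF ex] unfolding rpn_def by blast
  have hom: "homog p (Ldiv n p)" unfolding homog_def Ldiv_def by auto
  have "real (card (Ldiv n p)) * W p (length (word n 0)) / 2 ^ length (word n 0) \<le> real (rsize r0)"
    using main[OF p, of r0 "word n 0"] r0(1) hom w0 by simp
  then have M: "real (card (Ldiv n p)) * W p n / 2 ^ n \<le> real (rpn (Ldiv n p))"
    using r0(2) by (simp add: word_len)
  have Wn: "W p n \<ge> 0" unfolding W_def by simp
  have "W p n / real p = (2 ^ n / real p) * W p n / 2 ^ n" by simp
  also have "\<dots> \<le> real (card (Ldiv n p)) * W p n / 2 ^ n"
    using card_Ldiv[of p n] p Wn by (intro divide_right_mono mult_right_mono) auto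
  finally show ?thesis using M by simp
qed

lemma final_ineq:
  assumes p: "p > 2" and n: "n \<ge> 1"
  shows "1 * (1 / real n) * real p powr (log 2 (real n / log 2 (real p)) - 2) \<le> W p n / real p"
proof -
  define L where "L = LL p"
  have L1: "L > 1" using LL_gt1[OF p] unfolding L_def .
  have pL: "2 powr L = real p" using pow_LL[OF p] unfolding L_def .
  have Lg: "log 2 (real p) = L" unfolding L_def LL_def ..
  define x where "x = real n / L"
  have x0: "x > 0" unfolding x_def using n L1 by simp
  have pp: "real p > 0" using p by simp
  have "real p powr (log 2 x) = (2 powr L) powr (log 2 x)" using pL by simp
  also have "\<dots> = (2 powr (log 2 x)) powr L" by (simp add: powr_powr mult.commute)
  also have "\<dots> = x powr L" using x0 by simp
  finally have e1: "real p powr (log 2 x) = x powr L" .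
  have "real p powr (log 2 x - 2) = real p powr (log 2 x) / real p powr 2" by (rule powr_diff)
  also have "\<dots> = x powr L / (real p)^2" using e1 pp by (simp add: powr_numeral)
  also have "\<dots> = x powr (L - 1) * x / (real p)^2"
    using x0 by (simp add: powr_diff)
  finally have e2: "real p powr (log 2 x - 2) = x powr (L - 1) * x / (real p)^2" .
  have lhs: "1 * (1 / real n) * real p powr (log 2 (real n / log 2 (real p)) - 2)
     = x powr (L - 1) / (L * (real p)^2)"
    unfolding Lg x_def[symmetric] e2 using n L1 by (simp add: x_def field_simps)
  have "(real n / (2 * L)) \<le> (real n + 2 * L) / (2 * L)" using L1 by (simp add: divide_right_mono)
  then have pw: "(real n / (2 * L)) powr (L - 1) \<le> ((real n + 2 * L) / (2 * L)) powr (L - 1)"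
    using L1 n by (intro powr_mono2) auto
  have xe: "x / 2 = real n / (2 * L)" unfolding x_def by simp
  have W1: "(x / 2) powr (L - 1) \<le> W p n" unfolding W_def L_def[symmetric] xe by (fact pw)
  have "(x / 2) powr (L - 1) = x powr (L - 1) / 2 powr (L - 1)" by (rule powr_divide)
  also have "2 powr (L - 1) = real p / 2" using pL by (simp add: powr_diff)
  finally have W2: "2 * x powr (L - 1) / real p \<le> W p n" using W1 by (simp add: mult.commute)
  have "x powr (L - 1) / (L * (real p)^2) \<le> 2 * x powr (L - 1) / (real p)^2"
  proof -
    have a: "x powr (L - 1) \<ge> 0" by simp
    have "x powr (L - 1) / (L * (real p)^2) = (x powr (L - 1) / (real p)^2) * (1 / L)" by simp
    also have "\<dots> \<le> (x powr (L - 1) / (real p)^2) * 2" using L1 a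
      by (intro mult_left_mono) (auto simp: divide_le_eq)
    finally show ?thesis by (simp add: mult.commute)
  qed
  also have "\<dots> = (2 * x powr (L - 1) / real p) / real p" by (simp add: power2_eq_square)
  also have "\<dots> \<le> W p n / real p" using pp by (intro divide_right_mono[OF W2]) simp
  finally show ?thesis using lhs by simp
qed

theorem theorem7p1:
  shows "\<exists>c>0. \<forall>(p::nat) (n::nat). odd p \<longrightarrow> p > 2 \<longrightarrow> n \<ge> 1 \<longrightarrow>
     real (rpn (Ldiv n p)) \<ge> c * (1 / real n) * real p powr (log 2 (real n / log 2 (real p)) - 2)"
proof (intro exI[of _ "1::real"] conjI allI impI)
  fix p n :: nat
  assume h: "odd p" "p > 2" "n \<ge> 1"
  show "1 * (1 / real n) * real p powr (log 2 (real n / log 2 (real p)) - 2) \<le> real (rpn (Ldiv n p))"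
    using final_ineq[OF h(2) h(3)] rpn_bound[OF h(2) h(1), of n] by linarith
qed simp

end
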